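(* Let $p>2$ be a prime, $d\geq 2$ an integer with $d\mid p-1$, $f=(p-1)/d$, and $\omega$ a fixed generator of $\mathbb{F}_p^*$. Let $\theta=0$ if $f$ is even and $\theta=d/2$ if $f$ is odd. Let $\zeta\in\mathbb{C}$ be a primitive $p$-th root of unity and, for $i\in\mathbb{Z}/d\mathbb{Z}$, let $\eta_i=\sum_{k=0}^{f-1}\zeta^{\omega^{kd+i}}$ be the Gauss periods. For $i,j\in\mathbb{Z}/d\mathbb{Z}$ let $(i,j)=\#\{(u,v):0\leq u,v\leq f-1,\ 1+\omega^{du+i}\equiv\omega^{dv+j}\pmod p\}$ be the cyclotomic numbers of order $d$. For integers $k\geq 0$ and $0\leq\nu\leq d-1$ put $n(k,\nu)=\sum_{i=0}^{d-1}\eta_i^k\,\eta_{i+\nu}$ (indices mod $d$). Then $n(0,\nu)=-1$, $n(1,\nu)=p\,\delta_{\theta\nu}-f$, and for all $0\leq\nu\leq d-1$ and $k\geq 1$, \[ n(k+1,\nu)=\sum_{l=0}^{d-1}(\nu,l)\,n(k,l)+f\,\delta_{\theta\nu}\,n(k-1,0), \] where $\delta$ denotes the Kronecker delta.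
   Context: Indices of $\eta_i$ and of the cyclotomic numbers $(i,j)$ are taken modulo $d$. $\omega^{m}$ in the exponent of $\zeta$ is interpreted via any integer representative of $\omega^m\in\mathbb{F}_p$. *)

theory Defs
  imports "HOL-Analysis.Analysis" "HOL-Number_Theory.Number_Theory"
begin

definition prim_root_unity :: "nat \<Rightarrow> complex \<Rightarrow> bool" where
  "prim_root_unity p z \<longleftrightarrow> z ^ p = 1 \<and> (\<forall>k. 0 < k \<and> k < p \<longrightarrow> z ^ k \<noteq> 1)"

definition gauss_period :: "nat \<Rightarrow> nat \<Rightarrow> nat \<Rightarrow> complex \<Rightarrow> nat \<Rightarrow> complex" where
  "gauss_period p d \<omega> \<zeta> i =
     (\<Sum>k<(p - 1) div d. \<zeta> ^ (\<omega> ^ (k * d + i mod d) mod p))"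

definition cyc_num :: "nat \<Rightarrow> nat \<Rightarrow> nat \<Rightarrow> nat \<Rightarrow> nat \<Rightarrow> nat" where
  "cyc_num p d \<omega> i j =
     card {(u, v). u < (p - 1) div d \<and> v < (p - 1) div d \<and>
        [1 + \<omega> ^ (d * u + i mod d) = \<omega> ^ (d * v + j mod d)] (mod p)}"

definition nsum :: "nat \<Rightarrow> nat \<Rightarrow> nat \<Rightarrow> complex \<Rightarrow> nat \<Rightarrow> nat \<Rightarrow> complex" where
  "nsum p d \<omega> \<zeta> k \<nu> =
     (\<Sum>i<d. gauss_period p d \<omega> \<zeta> i ^ k * gauss_period p d \<omega> \<zeta> ((i + \<nu>) mod d))"

end

theory Submission
  imports Defs
begin

lemma sum_shift_periodic:
  fixes G :: "nat \<Rightarrow> 'a::ab_group_add"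
  assumes "\<And>x. G (x + f) = G x"
  shows "(\<Sum>k<f. G (k + s)) = (\<Sum>k<f. G k)"
proof (induction s)
  case 0 then show ?case by simp
next
  case (Suc s)
  have "(\<Sum>k<Suc f. G (k + s)) = G s + (\<Sum>k<f. G (k + Suc s))"
    by (subst sum.lessThan_Suc_shift) simp
  moreover have "(\<Sum>k<Suc f. G (k + s)) = (\<Sum>k<f. G (k + s)) + G s"
    using assms[of s] by (simp add: add.commute)
  ultimately show ?case using Suc by (simp add: add.commute)
qed

lemma per_mult:
  fixes F :: "nat \<Rightarrow> 'a" and d x q :: nat
  assumes "\<And>x. F (x + d) = F x"
  shows "F (x + d * q) = F x"
proof (induction q)
  case (Suc q)
  have "F (x + d * Suc q) = F (x + d * q + d)" by (simp add: algebra_simps)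
  then show ?case using assms Suc by simp
qed simp

lemma per_mod:
  fixes F :: "nat \<Rightarrow> 'a" and d x :: nat
  assumes "\<And>x. F (x + d) = F x"
  shows "F x = F (x mod d)"
proof -
  have "x mod d + d * (x div d) = x" by (rule mod_mult_div_eq)
  then show ?thesis using per_mult[of F d "x mod d" "x div d", OF assms] by simp
qed

lemma sum_split:
  fixes F :: "nat \<Rightarrow> 'a::comm_monoid_add"
  shows "(\<Sum>a<d * f. F a) = (\<Sum>l<d. \<Sum>q<f. F (d * q + l))"
proof (induction f)
  case 0 then show ?case by simp
next
  case (Suc f)
  have "{..<d * Suc f} = {..<d * f} \<union> {d * f..<d * f+d}" by auto
  then have "(\<Sum>a<d*Suc f. F a) = (\<Sum>a<d * f. F a) + (\<Sum>a\<in>{d * f..<d * f+d}. F a)"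
    by (simp add: sum.union_disjoint ivl_disj_int)
  also have "(\<Sum>a\<in>{d * f..<d * f+d}. F a) = (\<Sum>l<d. F (d * f + l))"
    by (simp add: sum.atLeastLessThan_shift_0 atLeast0LessThan)
    finally show ?case using Suc by (simp add: sum.distrib)
qed


lemma card_pairs:
  fixes n :: nat
  shows "card {(u, v). u < n \<and> v < n \<and> P u v} = (\<Sum>u<n. \<Sum>v<n. if P u v then 1 else 0::nat)"
proof -
  have e: "{(u, v). u < n \<and> v < n \<and> P u v} = {x \<in> {..<n} \<times> {..<n}. P (fst x) (snd x)}"
    by (intro equalityI subsetI) (clarsimp, clarsimp)
  have "card {x \<in> {..<n} \<times> {..<n}. P (fst x) (snd x)} = (\<Sum>x\<in>{..<n} \<times> {..<n}. if P (fst x) (snd x) then 1 else 0)"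
    by (subst sum.inter_filter[symmetric]) (simp_all add: finite_cartesian_product)
  also have "\<dots> = (\<Sum>u<n. \<Sum>v<n. if P u v then 1 else 0)"
    by (simp only: sum.cartesian_product split_def)
  finally show ?thesis using e by simp
qed

locale gp =
  fixes p d w :: nat and z :: complex
  assumes prime: "prime p" and p2: "p > 2" and d2: "d \<ge> 2" and ddvd: "d dvd p - 1"
    and root: "residue_primroot p w" and zr: "prim_root_unity p z"
begin

definition f where "f = (p - 1) div d"
definition g where "g a = z ^ (w ^ a)"
definition H where "H j = (\<Sum>k<f. g (k * d + j))"

lemma pf: "p - 1 = d * f" using ddvd by (simp add: f_def)
lemma fpos: "f > 0" using pf p2 by (cases f) auto
lemma cop: "coprime p w" using root by (simp add: residue_primroot_def)
lemma ordw: "ord p w = p - 1" using root prime by (simp add: residue_primroot_def totient_prime)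
lemma zp: "z ^ p = 1" using zr by (simp add: prim_root_unity_def)
lemma z1: "z \<noteq> 1"
proof -
  have "\<forall>k. 0 < k \<and> k < p \<longrightarrow> z ^ k \<noteq> 1" using zr by (simp add: prim_root_unity_def)
  from this[rule_format, of 1] p2 show ?thesis by simp
qed

lemma zpow_mod: "z ^ x = z ^ (x mod p)"
proof -
  have "z ^ x = z ^ (p * (x div p) + x mod p)" by simp
  also have "\<dots> = (z ^ p) ^ (x div p) * z ^ (x mod p)" by (subst power_add) (simp only: power_mult)
  finally show ?thesis using zp by simp
qed

lemma zpow_cong: "[x = y] (mod p) \<Longrightarrow> z ^ x = z ^ y"
  by (metis zpow_mod cong_def)

lemma wcong: "[w ^ a = w ^ b] (mod p) \<longleftrightarrow> [a = b] (mod (p - 1))"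
  using order_divides_expdiff[OF cop] ordw by simp

lemma g_per: "g (a + (p - 1)) = g a"
  unfolding g_def by (rule zpow_cong) (subst wcong, simp add: cong_def)

lemma H_per: "H (j + d) = H j"
proof -
  have "H (j + d) = (\<Sum>k<f. (\<lambda>k. g (k * d + j)) (k + 1))" by (simp add: H_def algebra_simps)
  also have "\<dots> = (\<Sum>k<f. g (k * d + j))"
  proof (rule sum_shift_periodic)
    fix x
    have e: "(x + f) * d + j = (x * d + j) + (p - 1)" using pf by (simp add: algebra_simps)
    have "g ((x + f) * d + j) = g ((x * d + j) + (p - 1))" by (simp only: e)
    also have "\<dots> = g (x * d + j)" by (rule g_per)
    finally show "g ((x + f) * d + j) = g (x * d + j)" .
  qed
  finally show ?thesis by (simp add: H_def)
qed

lemma H_mod: "H j = H (j mod d)" by (rule per_mod[of H d, OF H_per])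
lemma H_mult: "H (j + d * q) = H j" by (rule per_mult[of H d, OF H_per])

lemma gp_eq: "gauss_period p d w z i = H i"
proof -
  have "gauss_period p d w z i = H (i mod d)"
    unfolding gauss_period_def H_def g_def f_def[symmetric] by (simp add: zpow_mod[symmetric])
  then show ?thesis using H_mod by simp
qed

lemma wpow_nz: "\<not> p dvd w ^ a"
proof
  assume "p dvd w ^ a"
  moreover have "coprime p (w ^ a)" using cop by simp
  ultimately have "p dvd 1" by (meson coprime_common_divisor dvd_refl)
  then show False using p2 by simp
qed

lemma bij: "bij_betw (\<lambda>a. w ^ a mod p) {..<p-1} {1..<p}"
proof -
  have inj: "inj_on (\<lambda>a. w ^ a mod p) {..<p-1}"
  proof (rule inj_onI)
    fix a b assume a: "a \<in> {..<p-1}" and b: "b \<in> {..<p-1}" and e: "w ^ a mod p = w ^ b mod p"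
    then have "[a = b] (mod (p - 1))" using wcong by (simp add: cong_def)
    then show "a = b" using a b by (simp add: cong_def)
  qed
  have sub: "(\<lambda>a. w ^ a mod p) ` {..<p-1} \<subseteq> {1..<p}"
  proof
    fix x assume "x \<in> (\<lambda>a. w ^ a mod p) ` {..<p-1}"
    then obtain a where "x = w ^ a mod p" by auto
    moreover have "w ^ a mod p \<noteq> 0" using wpow_nz by (simp add: dvd_eq_mod_eq_0)
    moreover have "w ^ a mod p < p" using p2 by simp
    ultimately show "x \<in> {1..<p}" by auto
  qed
  have "card ((\<lambda>a. w ^ a mod p) ` {..<p-1}) = card {1..<p}"
    using card_image[OF inj] by simp
  then have "(\<lambda>a. w ^ a mod p) ` {..<p-1} = {1..<p}"
    using sub by (simp add: card_subset_eq)
  then show ?thesis using inj by (simp add: bij_betw_def)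
qed

lemma sum_all: "(\<Sum>a<p-1. g a) = -1"
proof -
  have a: "(\<Sum>x<p. z ^ x) = z ^ 0 + (\<Sum>x\<in>{Suc 0..<p}. z ^ x)"
    using p2 by (simp add: atLeast0LessThan[symmetric] sum.atLeast_Suc_lessThan)
  moreover have "(\<Sum>x<p. z ^ x) = 0"
    using geometric_sum[OF z1, of p] zp by simp
  ultimately have b: "(\<Sum>x\<in>{1..<p}. z ^ x) = -1" by (simp add: eq_neg_iff_add_eq_0 add.commute)
  have "(\<Sum>a<p-1. g a) = (\<Sum>a<p-1. z ^ (w ^ a mod p))"
    by (simp add: g_def zpow_mod[symmetric])
  also have "\<dots> = (\<Sum>x\<in>{1..<p}. z ^ x)"
    by (rule sum.reindex_bij_betw[OF bij])
  finally show ?thesis using b by simp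
qed

lemma sum_H: "(\<Sum>i<d. H (i + a)) = -1"
proof -
  have "(\<Sum>i<d. H (i + a)) = (\<Sum>i<d. H i)"
    by (rule sum_shift_periodic) (rule H_per)
  also have "\<dots> = (\<Sum>i<d. \<Sum>k<f. g (d * k + i))" by (simp add: H_def mult.commute)
  also have "\<dots> = (\<Sum>a<d * f. g a)" by (rule sum_split[symmetric])
  also have "\<dots> = -1" using sum_all pf by simp
  finally show ?thesis .
qed

lemma half_exists: "p dvd 1 + w ^ ((p - 1) div 2)"
proof -
  define h where "h = (p - 1) div 2"
  have odd: "odd p" using prime p2 prime_odd_nat by blast
  then have "even (p - 1)" by simp
  then have h2: "p - 1 = 2 * h" unfolding h_def by (elim evenE) simp
  have hpos: "0 < h" "h < p - 1" using p2 h2 by auto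
  have "[w ^ (p - 1) = 1] (mod p)" using ord[of w p] ordw by simp
  moreover have "w ^ (p - 1) = w ^ h * w ^ h" using h2 by (simp add: power_add[symmetric] mult_2)
  ultimately have "[w ^ h * w ^ h = 1] (mod p)" by simp
  then have "[int (w ^ h * w ^ h) = int 1] (mod int p)" by (simp only: cong_int_iff)
  then have "int p dvd int (w ^ h) * int (w ^ h) - 1"
    by (simp add: cong_iff_dvd_diff)
  then have "int p dvd (int (w ^ h) - 1) * (int (w ^ h) + 1)" by (simp add: algebra_simps)
  moreover have "prime (int p)" using prime by simp
  ultimately have "int p dvd int (w ^ h) - 1 \<or> int p dvd int (w ^ h) + 1"
    by (simp add: prime_dvd_mult_iff)
  moreover have "\<not> int p dvd int (w ^ h) - 1"
  proof
    assume "int p dvd int (w ^ h) - 1"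
    then have "[int (w ^ h) = int 1] (mod int p)" by (simp add: cong_iff_dvd_diff)
    then have "[w ^ h = 1] (mod p)" by (simp only: cong_int_iff)
    then have "p - 1 dvd h" using ord_divides[of w h p] ordw by simp
    then show False using nat_dvd_not_less[OF hpos] by simp
  qed
  ultimately have "int p dvd int (1 + w ^ h)" by (simp add: add.commute)
  then show ?thesis unfolding h_def by (simp only: int_dvd_int_iff)
qed

lemma half: "p dvd 1 + w ^ c \<longleftrightarrow> c mod (p - 1) = (p - 1) div 2"
proof -
  define h where "h = (p - 1) div 2"
  have hl: "h < p - 1" using p2 unfolding h_def by auto
  have H0: "[1 + w ^ h = 0] (mod p)" using half_exists cong_0_iff unfolding h_def by blast
  have "p dvd 1 + w ^ c \<longleftrightarrow> [1 + w ^ c = 0] (mod p)" by (simp add: cong_0_iff)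
  also have "\<dots> \<longleftrightarrow> [1 + w ^ c = 1 + w ^ h] (mod p)"
    using H0 by (meson cong_sym cong_trans)
  also have "\<dots> \<longleftrightarrow> [c = h] (mod (p - 1))" by (subst cong_add_lcancel_nat) (rule wcong)
  also have "\<dots> \<longleftrightarrow> c mod (p - 1) = h" using hl by (simp add: cong_def)
  finally show ?thesis unfolding h_def .
qed

lemma dlog: assumes "\<not> p dvd X" shows "\<exists>e<p-1. [w ^ e = X] (mod p)"
proof -
  have "X mod p \<in> {1..<p}" using assms p2 by (auto simp: dvd_eq_mod_eq_0 intro: Suc_leI)
  then have "X mod p \<in> (\<lambda>a. w ^ a mod p) ` {..<p-1}" using bij by (simp add: bij_betw_def)
  then obtain e where "e < p - 1" "w ^ e mod p = X mod p" by auto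
  then show ?thesis by (auto simp: cong_def)
qed

lemma dlog_unique: "[w ^ a = X] (mod p) \<Longrightarrow> [w ^ e = X] (mod p) \<Longrightarrow> a < p - 1 \<Longrightarrow> e < p - 1 \<Longrightarrow> a = e"
proof -
  assume "[w ^ a = X] (mod p)" "[w ^ e = X] (mod p)" "a < p - 1" "e < p - 1"
  then have "[w ^ a = w ^ e] (mod p)" by (meson cong_sym cong_trans)
  then have "[a = e] (mod (p - 1))" by (simp add: wcong)
  then show "a = e" using \<open>a < p - 1\<close> \<open>e < p - 1\<close> by (simp add: cong_def)
qed

lemma sel: assumes "e < p - 1" "[w ^ e = X] (mod p)"
  shows "(\<Sum>a<p-1. if [w ^ a = X] (mod p) then F a else 0) = F e"
proof -
  have "(\<Sum>a<p-1. if [w ^ a = X] (mod p) then F a else 0) = (\<Sum>a<p-1. if a = e then F a else 0)"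
    by (rule sum.cong) (use assms dlog_unique in auto)
  also have "\<dots> = F e" using assms by simp
  finally show ?thesis .
qed

lemma sel0: assumes "p dvd X"
  shows "(\<Sum>a<p-1. if [w ^ a = X] (mod p) then F a else 0) = 0"
proof -
  have "\<not> [w ^ a = X] (mod p)" for a
  proof
    assume "[w ^ a = X] (mod p)"
    then have "p dvd w ^ a" using assms by (simp add: cong_def dvd_eq_mod_eq_0)
    then show False using wpow_nz by blast
  qed
  then show ?thesis by simp
qed

definition S where "S i X = (\<Sum>u<f. z ^ (w ^ (d * u + i) * X))"
definition Q where "Q i X = (\<Sum>a<p-1. if [w ^ a = X] (mod p) then H (i + a) else 0)"

lemma S_nz: assumes "[w ^ e = X] (mod p)" shows "S i X = H (i + e)"
proof -
  have "z ^ (w ^ (d * u + i) * X) = g (u * d + (i + e))" for u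
  proof -
    have "[w ^ (d * u + i) * X = w ^ (d * u + i) * w ^ e] (mod p)"
      using assms by (simp add: cong_mult cong_sym)
    then have "z ^ (w ^ (d * u + i) * X) = z ^ (w ^ (d * u + i) * w ^ e)" by (rule zpow_cong)
    also have "w ^ (d * u + i) * w ^ e = w ^ (u * d + (i + e))" by (simp add: power_add[symmetric] algebra_simps)
    finally show ?thesis by (simp add: g_def)
  qed
  then show ?thesis by (simp add: S_def H_def)
qed

lemma S_z: assumes "p dvd X" shows "S i X = of_nat f"
proof -
  have "z ^ (w ^ (d * u + i) * X) = 1" for u
  proof -
    have "(w ^ (d * u + i) * X) mod p = 0" using assms by (simp add: dvd_eq_mod_eq_0[symmetric])
    then show ?thesis using zpow_mod[of "w ^ (d * u + i) * X"] by simp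
  qed
  then show ?thesis by (simp add: S_def)
qed

lemma S_Q: "S i X = (if p dvd X then of_nat f else 0) + Q i X"
proof (cases "p dvd X")
  case True then show ?thesis using sel0[OF True, of "\<lambda>a. H (i + a)"] by (simp add: S_z Q_def)
next
  case False
  then obtain e where "e < p - 1" "[w ^ e = X] (mod p)" using dlog by blast
  note e = this
  show ?thesis using sel[OF e, of "\<lambda>a. H (i + a)"] S_nz[OF e(2), of i] False by (simp add: Q_def)
qed

lemma sumS: "(\<Sum>i<d. S i X) = (if p dvd X then of_nat (p - 1) else -1)"
proof (cases "p dvd X")
  case True then show ?thesis using pf by (simp add: S_z)
next
  case False
  then obtain e where "e < p - 1" "[w ^ e = X] (mod p)" using dlog by blast
  then show ?thesis using False by (simp add: S_nz sum_H)
qed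

lemma prodH: "H i * H (i + nu) = (\<Sum>v<f. S i (1 + w ^ (d * v + nu)))"
proof -
  have "H i * H (i + nu) = (\<Sum>u<f. g (u * d + i) * (\<Sum>v<f. g (v * d + (i + nu))))"
    by (simp add: H_def sum_distrib_right)
  also have "\<dots> = (\<Sum>u<f. g (u * d + i) * (\<Sum>v<f. g ((v + u) * d + (i + nu))))"
  proof (rule sum.cong[OF refl])
    fix u
    have "(\<Sum>v<f. (\<lambda>v. g (v * d + (i + nu))) (v + u)) = (\<Sum>v<f. g (v * d + (i + nu)))"
    proof (rule sum_shift_periodic)
      fix x
      have e: "(x + f) * d + (i + nu) = (x * d + (i + nu)) + (p - 1)" using pf by (simp add: algebra_simps)
      have "g ((x + f) * d + (i + nu)) = g ((x * d + (i + nu)) + (p - 1))" by (simp only: e)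
      also have "\<dots> = g (x * d + (i + nu))" by (rule g_per)
      finally show "g ((x + f) * d + (i + nu)) = g (x * d + (i + nu))" .
    qed
    then show "g (u * d + i) * (\<Sum>v<f. g (v * d + (i + nu))) = g (u * d + i) * (\<Sum>v<f. g ((v + u) * d + (i + nu)))"
      by simp
  qed
  also have "\<dots> = (\<Sum>u<f. \<Sum>v<f. z ^ (w ^ (d * u + i) * (1 + w ^ (d * v + nu))))"
  proof -
    have "g (u * d + i) * g ((v + u) * d + (i + nu)) = z ^ (w ^ (d * u + i) * (1 + w ^ (d * v + nu)))" for u v
    proof -
      have e: "(v + u) * d + (i + nu) = (d * u + i) + (d * v + nu)" by (simp add: algebra_simps)
      show ?thesis unfolding g_def e by (simp add: power_add algebra_simps)
    qed
    then show ?thesis by (simp add: sum_distrib_left)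
  qed
  also have "\<dots> = (\<Sum>v<f. S i (1 + w ^ (d * v + nu)))"
    by (subst sum.swap) (simp add: S_def)
  finally show ?thesis .
qed

definition \<theta> where "\<theta> = (if even f then 0 else d div 2)"

lemma half_dec: "\<exists>w0<f. (p - 1) div 2 = d * w0 + \<theta> \<and> \<theta> < d"
proof (cases "even f")
  case True
  then obtain m where m: "f = 2 * m" by (elim evenE)
  have "(p - 1) div 2 = d * m" using pf m by simp
  moreover have "m < f" using m fpos by simp
  ultimately show ?thesis using True d2 by (auto simp: \<theta>_def)
next
  case False
  have "odd p" using prime p2 prime_odd_nat by blast
  then have "even (d * f)" using pf[symmetric] p2 by simp
  then have "even d" using False by simp
  then obtain r where r: "d = 2 * r" by (elim evenE)
  obtain m where m: "f = 2 * m + 1" using False by (metis oddE)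
  have "(p - 1) div 2 = d * m + r" using pf r m by (simp add: algebra_simps)
  moreover have "m < f" using m by simp
  moreover have "\<theta> = d div 2" using False by (simp add: \<theta>_def)
  then have "\<theta> = r" using r by simp
  ultimately show ?thesis using r d2 by auto
qed

lemma Zset: assumes "nu < d"
  shows "{v. v < f \<and> p dvd 1 + w ^ (d * v + nu)} = (if \<theta> = nu then {SOME w0. w0 < f \<and> (p - 1) div 2 = d * w0 + \<theta>} else {})"
proof -
  obtain w0 where w0: "w0 < f" "(p - 1) div 2 = d * w0 + \<theta>" "\<theta> < d" using half_dec by blast
  have sw: "(SOME w0. w0 < f \<and> (p - 1) div 2 = d * w0 + \<theta>) = w0"
  proof (rule some_equality)
    show "w0 < f \<and> (p - 1) div 2 = d * w0 + \<theta>" using w0 by simp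
    fix x assume "x < f \<and> (p - 1) div 2 = d * x + \<theta>"
    then have "d * x + \<theta> = d * w0 + \<theta>" using w0 by simp
    then show "x = w0" using d2 by simp
  qed
  have "v < f \<Longrightarrow> p dvd 1 + w ^ (d * v + nu) \<longleftrightarrow> v = w0 \<and> nu = \<theta>" for v
  proof -
    assume v: "v < f"
    have "d * v + nu < d * v + d" using assms by simp
    also have "d * v + d \<le> d * f" using v by (metis Suc_leI mult_Suc_right mult_le_mono2 add.commute)
    finally have lt: "d * v + nu < p - 1" using pf by simp
    have "p dvd 1 + w ^ (d * v + nu) \<longleftrightarrow> d * v + nu = d * w0 + \<theta>"
      using half[of "d * v + nu"] lt w0 by simp
    also have "\<dots> \<longleftrightarrow> v = w0 \<and> nu = \<theta>"
    proof
      assume e: "d * v + nu = d * w0 + \<theta>"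
      have "(d * v + nu) div d = v" "(d * v + nu) mod d = nu" using assms by auto
      moreover have "(d * w0 + \<theta>) div d = w0" "(d * w0 + \<theta>) mod d = \<theta>" using w0 by auto
      ultimately show "v = w0 \<and> nu = \<theta>" using e by metis
    qed simp
    finally show ?thesis .
  qed
  then show ?thesis using sw w0 by auto
qed

lemma cardZ: assumes "nu < d"
  shows "card {v. v < f \<and> p dvd 1 + w ^ (d * v + nu)} = (if \<theta> = nu then 1 else 0)"
  using Zset[OF assms] by simp

lemma nsum_eq: "nsum p d w z k nu = (\<Sum>i<d. H i ^ k * H (i + nu))"
  by (simp add: nsum_def gp_eq H_mod[symmetric])

lemma cyc_eq: assumes "nu < d" "l < d"
  shows "of_nat (cyc_num p d w nu l) =
    (\<Sum>q<f. \<Sum>v<f. if [w ^ (d * q + l) = 1 + w ^ (d * v + nu)] (mod p) then 1 else (0::complex))"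
proof -
  have "cyc_num p d w nu l = card {(u, v). u < f \<and> v < f \<and> [1 + w ^ (d * u + nu) = w ^ (d * v + l)] (mod p)}"
    using assms by (simp add: cyc_num_def f_def)
  also have "\<dots> = (\<Sum>u<f. \<Sum>v<f. if [1 + w ^ (d * u + nu) = w ^ (d * v + l)] (mod p) then 1 else 0)"
    by (rule card_pairs)
  finally have "(of_nat (cyc_num p d w nu l)::complex) = of_nat (\<Sum>u<f. \<Sum>v<f. if [1 + w ^ (d * u + nu) = w ^ (d * v + l)] (mod p) then 1 else 0)"
    by (simp only:)
  also have "\<dots> = (\<Sum>u<f. \<Sum>v<f. of_nat (if [1 + w ^ (d * u + nu) = w ^ (d * v + l)] (mod p) then 1 else 0))"
    by (simp only: of_nat_sum)
  also have "\<dots> = (\<Sum>u<f. \<Sum>v<f. if [1 + w ^ (d * u + nu) = w ^ (d * v + l)] (mod p) then 1 else (0::complex))"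
    by (intro sum.cong refl) simp
  also have "\<dots> = (\<Sum>v<f. \<Sum>u<f. if [1 + w ^ (d * u + nu) = w ^ (d * v + l)] (mod p) then 1 else (0::complex))"
    by (rule sum.swap)
  also have "\<dots> = (\<Sum>q<f. \<Sum>v<f. if [w ^ (d * q + l) = 1 + w ^ (d * v + nu)] (mod p) then 1 else (0::complex))"
    by (simp add: cong_sym_eq)
  finally show ?thesis .
qed

lemma rec_prod: assumes "nu < d"
  shows "H i * H (i + nu) = of_nat f * (if \<theta> = nu then 1 else 0) + (\<Sum>l<d. of_nat (cyc_num p d w nu l) * H (i + l))"
proof -
  let ?X = "\<lambda>v. 1 + w ^ (d * v + nu)"
  have "H i * H (i + nu) = (\<Sum>v<f. (if p dvd ?X v then of_nat f else 0) + Q i (?X v))"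
    by (simp add: prodH S_Q)
  also have "\<dots> = (\<Sum>v<f. if p dvd ?X v then of_nat f else 0) + (\<Sum>v<f. Q i (?X v))"
    by (simp add: sum.distrib)
  also have "(\<Sum>v<f. if p dvd ?X v then of_nat f else (0::complex)) = of_nat f * (if \<theta> = nu then 1 else 0)"
  proof -
    have "(\<Sum>v<f. if p dvd ?X v then of_nat f else (0::complex)) = (\<Sum>v\<in>{v\<in>{..<f}. p dvd ?X v}. of_nat f)"
      by (simp only: sum.inter_filter[OF finite_lessThan])
    also have "{v\<in>{..<f}. p dvd ?X v} = {v. v < f \<and> p dvd ?X v}" by auto
    finally show ?thesis using cardZ[OF assms] by simp
  qed
  also have "(\<Sum>v<f. Q i (?X v)) = (\<Sum>l<d. of_nat (cyc_num p d w nu l) * H (i + l))"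
  proof -
    have "(\<Sum>v<f. Q i (?X v)) = (\<Sum>a<p-1. \<Sum>v<f. if [w ^ a = ?X v] (mod p) then H (i + a) else 0)"
      unfolding Q_def by (rule sum.swap)
    also have "\<dots> = (\<Sum>l<d. \<Sum>q<f. \<Sum>v<f. if [w ^ (d * q + l) = ?X v] (mod p) then H (i + (d * q + l)) else 0)"
      unfolding pf by (rule sum_split)
    also have "\<dots> = (\<Sum>l<d. \<Sum>q<f. \<Sum>v<f. (if [w ^ (d * q + l) = ?X v] (mod p) then 1 else 0) * H (i + l))"
    proof -
      have hq: "H (i + (d * q + l)) = H (i + l)" for q l
        using H_mult[of "i + l" q] by (simp add: algebra_simps)
      show ?thesis by (intro sum.cong refl) (simp add: hq)
    qed
    also have "\<dots> = (\<Sum>l<d. of_nat (cyc_num p d w nu l) * H (i + l))"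
      by (rule sum.cong[OF refl]) (simp add: cyc_eq assms sum_distrib_right)
    finally show ?thesis .
  qed
  finally show ?thesis .
qed

lemma n1: assumes "nu < d"
  shows "(\<Sum>i<d. H i * H (i + nu)) = of_nat p * (if \<theta> = nu then 1 else 0) - of_nat f"
proof -
  let ?X = "\<lambda>v. 1 + w ^ (d * v + nu)"
  let ?Z = "{v. v < f \<and> p dvd ?X v}"
  have "(\<Sum>i<d. H i * H (i + nu)) = (\<Sum>v<f. \<Sum>i<d. S i (?X v))"
    by (simp add: prodH sum.swap[of _ "{..<d}"])
  also have "\<dots> = (\<Sum>v<f. if p dvd ?X v then of_nat (p - 1) else -1)"
    by (simp add: sumS)
  also have "\<dots> = (\<Sum>v<f. (if p dvd ?X v then of_nat p else 0) - 1)"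
    by (rule sum.cong) (use p2 in \<open>auto simp: of_nat_diff\<close>)
  also have "\<dots> = (\<Sum>v<f. if p dvd ?X v then of_nat p else 0) - of_nat f"
    by (simp add: sum_subtractf)
  also have "(\<Sum>v<f. if p dvd ?X v then (of_nat p::complex) else 0) = of_nat p * (if \<theta> = nu then 1 else 0)"
  proof -
    have "(\<Sum>v<f. if p dvd ?X v then (of_nat p::complex) else 0) = (\<Sum>v\<in>{v\<in>{..<f}. p dvd ?X v}. of_nat p)"
      by (simp only: sum.inter_filter[OF finite_lessThan])
    also have "{v\<in>{..<f}. p dvd ?X v} = ?Z" by auto
    finally show ?thesis using cardZ[OF assms] by simp
  qed
  finally show ?thesis .
qed

end

theorem lemma1:
  fixes p d \<omega> :: nat and \<zeta> :: complex
  assumes "prime p" and "p > 2" and "d \<ge> 2" and "d dvd p - 1"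
    and "residue_primroot p \<omega>"
    and "prim_root_unity p \<zeta>"
  defines "f \<equiv> (p - 1) div d"
  defines "\<theta> \<equiv> (if even f then 0 else d div 2)"
  shows "(\<forall>\<nu><d. nsum p d \<omega> \<zeta> 0 \<nu> = -1)
    \<and> (\<forall>\<nu><d. nsum p d \<omega> \<zeta> 1 \<nu> =
          of_nat p * (if \<theta> = \<nu> then 1 else 0) - of_nat f)
    \<and> (\<forall>\<nu><d. \<forall>k\<ge>1. nsum p d \<omega> \<zeta> (k + 1) \<nu> =
          (\<Sum>l<d. of_nat (cyc_num p d \<omega> \<nu> l) * nsum p d \<omega> \<zeta> k l)
          + of_nat f * (if \<theta> = \<nu> then 1 else 0) * nsum p d \<omega> \<zeta> (k - 1) 0)"
proof -
  interpret G: gp p d \<omega> \<zeta> using assms by (simp add: gp_def)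
  have ff: "f = G.f" by (simp add: f_def G.f_def)
  have tt: "\<theta> = G.\<theta>" by (simp add: \<theta>_def G.\<theta>_def ff)
  show ?thesis
  proof (intro conjI allI impI)
    fix nu assume "nu < d"
    show "nsum p d \<omega> \<zeta> 0 nu = -1" by (simp add: G.nsum_eq G.sum_H)
  next
    fix nu assume nu: "nu < d"
    show "nsum p d \<omega> \<zeta> 1 nu = of_nat p * (if \<theta> = nu then 1 else 0) - of_nat f"
      using G.n1[OF nu] by (simp add: G.nsum_eq ff tt)
  next
    fix nu k :: nat assume nu: "nu < d" and k: "1 \<le> k"
    let ?c = "\<lambda>l. of_nat (cyc_num p d \<omega> nu l) :: complex"
    let ?D = "of_nat f * (if \<theta> = nu then 1 else 0) :: complex"
    have "nsum p d \<omega> \<zeta> (k + 1) nu = (\<Sum>i<d. G.H i ^ k * (G.H i * G.H (i + nu)))"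
      by (simp add: G.nsum_eq algebra_simps)
    also have "\<dots> = (\<Sum>i<d. G.H i ^ k * (?D + (\<Sum>l<d. ?c l * G.H (i + l))))"
      using G.rec_prod[OF nu] by (simp add: ff tt)
    also have "\<dots> = (\<Sum>i<d. ?D * G.H i ^ k + (\<Sum>l<d. ?c l * (G.H i ^ k * G.H (i + l))))"
      by (rule sum.cong[OF refl]) (simp add: algebra_simps sum_distrib_left)
    also have "\<dots> = ?D * (\<Sum>i<d. G.H i ^ k) + (\<Sum>i<d. \<Sum>l<d. ?c l * (G.H i ^ k * G.H (i + l)))"
      by (simp add: sum.distrib sum_distrib_left)
    also have "(\<Sum>i<d. \<Sum>l<d. ?c l * (G.H i ^ k * G.H (i + l))) = (\<Sum>l<d. \<Sum>i<d. ?c l * (G.H i ^ k * G.H (i + l)))"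
      by (rule sum.swap)
    also have "\<dots> = (\<Sum>l<d. ?c l * (\<Sum>i<d. G.H i ^ k * G.H (i + l)))"
      by (simp add: sum_distrib_left)
    also have "(\<Sum>i<d. G.H i ^ k) = nsum p d \<omega> \<zeta> (k - 1) 0"
    proof -
      obtain k' where k': "k = Suc k'" using k by (cases k) auto
      show ?thesis by (simp add: G.nsum_eq k' power_Suc2 mult.commute)
    qed
    also have "(\<Sum>l<d. ?c l * (\<Sum>i<d. G.H i ^ k * G.H (i + l))) = (\<Sum>l<d. ?c l * nsum p d \<omega> \<zeta> k l)"
      by (simp add: G.nsum_eq)
    finally show "nsum p d \<omega> \<zeta> (k + 1) nu = (\<Sum>l<d. ?c l * nsum p d \<omega> \<zeta> k l) + ?D * nsum p d \<omega> \<zeta> (k - 1) 0"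
      by (simp add: algebra_simps)
  qed
qed

end
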